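(* Let $\lambda_1,\lambda_2\ge0$ with $\lambda_1+\lambda_2(p-1)>0$, and let $w_i=\lambda_1+\lambda_2(p-i)$ for $i=1,\dots,p$. Let $\mathbf A\in\mathbb R^{n\times p}$ with columns $\mathbf a_1,\dots,\mathbf a_p$, let $\mathbf y\in\mathbb R^n$, and let $\widehat{\mathbf x}$ be any minimizer of $\|\mathbf A\mathbf x-\mathbf y\|_1+\sum_{i=1}^p w_i|x|_{[i]}$ over $\mathbf x\in\mathbb R^p$. Then for every pair $(i,j)$ with $\|\operatorname{sign}(\widehat x_i)\mathbf a_i-\operatorname{sign}(\widehat x_j)\mathbf a_j\|_1<\lambda_2$ we have $|\widehat x_i|=|\widehat x_j|$. Moreover, if the columns satisfy $\mathbf 1^T\mathbf a_k=0$ and $\|\mathbf a_k\|_2=1$ for all $k$, and $\rho_{ij}=\mathbf a_i^T\mathbf a_j$, then for every pair $(i,j)$ with $\sqrt{n(2-2\rho_{ij}\operatorname{sign}(\widehat x_i\widehat x_j))}<\lambda_2$ we have $|\widehat x_i|=|\widehat x_j|$.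
   Context: $|x|_{[i]}$ denotes the $i$-th largest component of $\mathbf x$ in magnitude; $\mathbf 1$ is the all-ones vector; $\operatorname{sign}$ denotes the sign function. *)

theory Defs
  imports Complex_Main
begin

text \<open>Vectors in R^p are rendered as functions nat => real, only indices 0..p-1 matter
  (0-based). A matrix in R^(n x p) is a function nat => nat => real, entry (r,k) = A r k.\<close>

definition sorted_abs :: "nat \<Rightarrow> (nat \<Rightarrow> real) \<Rightarrow> real list" where
  "sorted_abs p x = rev (sort (map (\<lambda>k. \<bar>x k\<bar>) [0..<p]))"

definition abs_kth :: "nat \<Rightarrow> (nat \<Rightarrow> real) \<Rightarrow> nat \<Rightarrow> real" where
  "abs_kth p x i = sorted_abs p x ! (i - 1)"

definition lad_oscar_obj ::
  "nat \<Rightarrow> nat \<Rightarrow> (nat \<Rightarrow> nat \<Rightarrow> real) \<Rightarrow> (nat \<Rightarrow> real) \<Rightarrow> real \<Rightarrow> real \<Rightarrow> (nat \<Rightarrow> real) \<Rightarrow> real" where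
  "lad_oscar_obj n p A y l1 l2 x =
     (\<Sum>r<n. \<bar>(\<Sum>k<p. A r k * x k) - y r\<bar>)
     + (\<Sum>i=1..p. (l1 + l2 * (real p - real i)) * abs_kth p x i)"

end

theory Submission imports Defs "HOL-Library.Multiset" begin


definition QL :: "real list \<Rightarrow> real" where
  "QL L = (\<Sum>a\<leftarrow>L. \<Sum>b\<leftarrow>L. max a b)"

lemma QL_mset: "mset L = mset M \<Longrightarrow> QL L = QL M"
proof -
  assume h: "mset L = mset M"
  have e: "\<And>f::real\<Rightarrow>real. sum_list (map f L) = sum_list (map f M)"
    by (metis h mset_map sum_mset_sum_list)
  have 1: "(\<lambda>a. \<Sum>b\<leftarrow>L. max a b) = (\<lambda>a. \<Sum>b\<leftarrow>M. max a b)"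
    by (rule ext) (rule e)
  show ?thesis unfolding QL_def 1 by (rule e)
qed

lemma QL_sorted: "sorted_wrt (\<ge>) L \<Longrightarrow>
   QL L = (\<Sum>m<length L. (2 * (real (length L) - 1 - real m) + 1) * L ! m)"
proof (induction L)
  case Nil thus ?case by (simp add: QL_def)
next
  case (Cons a L)
  have ge: "\<forall>b\<in>set L. b \<le> a" using Cons.prems by simp
  have m1: "(\<Sum>b\<leftarrow>L. max a b) = a * length L"
  proof -
    have "(\<Sum>b\<leftarrow>L. max a b) = (\<Sum>b\<leftarrow>L. a)"
      by (rule arg_cong[where f=sum_list], rule map_cong) (use ge in auto)
    thus ?thesis by (simp add: sum_list_triv)
  qed
  have m2: "(\<Sum>c\<leftarrow>L. max c a + (\<Sum>b\<leftarrow>L. max c b)) = a * length L + QL L"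
  proof -
    have "(\<Sum>c\<leftarrow>L. max c a + (\<Sum>b\<leftarrow>L. max c b)) = (\<Sum>c\<leftarrow>L. a + (\<Sum>b\<leftarrow>L. max c b))"
      by (rule arg_cong[where f=sum_list], rule map_cong) (use ge in auto)
    thus ?thesis by (simp add: sum_list_addf sum_list_triv QL_def)
  qed
  have "QL (a#L) = a + a * length L + (a * length L + QL L)"
    using m1 m2 by (simp add: QL_def)
  also have "\<dots> = (2 * (real (length (a#L)) - 1 - real 0) + 1) * (a#L) ! 0
     + (\<Sum>m<length L. (2 * (real (length (a#L)) - 1 - real (Suc m)) + 1) * (a#L) ! Suc m)"
    using Cons by (simp add: algebra_simps)
  also have "\<dots> = (\<Sum>m<length (a#L). (2 * (real (length (a#L)) - 1 - real m) + 1) * (a#L) ! m)"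
    by (simp only: length_Cons sum.lessThan_Suc_shift)
  finally show ?case .
qed

definition Sx :: "nat \<Rightarrow> (nat \<Rightarrow> real) \<Rightarrow> real" where
  "Sx p t = (\<Sum>k<p. t k)"
definition Dx :: "nat \<Rightarrow> (nat \<Rightarrow> real) \<Rightarrow> real" where
  "Dx p t = (\<Sum>k<p. \<Sum>l<p. max (t k) (t l))"

lemma pen_formula:
  "(\<Sum>i=1..p. (l1 + l2 * (real p - real i)) * abs_kth p x i)
    = l1 * Sx p (\<lambda>k. \<bar>x k\<bar>) + l2 * (Dx p (\<lambda>k. \<bar>x k\<bar>) - Sx p (\<lambda>k. \<bar>x k\<bar>)) / 2"
proof -
  define L where "L = sorted_abs p x"
  define M where "M = map (\<lambda>k. \<bar>x k\<bar>) [0..<p]"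
  have ms: "mset L = mset M" by (simp add: L_def M_def sorted_abs_def)
  have len: "length L = p" by (simp add: L_def sorted_abs_def)
  have srt: "sorted_wrt (\<ge>) L" by (simp add: L_def sorted_abs_def sorted_wrt_rev)
  have SL: "sum_list L = Sx p (\<lambda>k. \<bar>x k\<bar>)"
  proof -
    have "sum_list L = sum_list M" by (metis ms sum_mset_sum_list)
    also have "\<dots> = (\<Sum>k<p. \<bar>x k\<bar>)" unfolding M_def
      by (simp only: interv_sum_list_conv_sum_set_nat set_upt atLeast0LessThan)
    finally show ?thesis by (simp add: Sx_def)
  qed
  have QLv: "QL L = Dx p (\<lambda>k. \<bar>x k\<bar>)"
  proof -
    have "QL L = QL M" by (rule QL_mset[OF ms])
    also have "\<dots> = Dx p (\<lambda>k. \<bar>x k\<bar>)" unfolding M_def QL_def Dx_def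
      by (simp add: sum_list_distinct_conv_sum_set atLeast0LessThan[symmetric] o_def)
    finally show ?thesis .
  qed
  define T where "T = (\<Sum>m<p. (real p - 1 - real m) * L ! m)"
  have S2: "sum_list L = (\<Sum>m<p. L ! m)"
    by (simp add: sum_list_sum_nth len atLeast0LessThan)
  have Q2: "QL L = 2 * T + sum_list L"
  proof -
    have "QL L = (\<Sum>m<p. 2 * ((real p - 1 - real m) * L ! m) + L ! m)"
      unfolding QL_sorted[OF srt] len by (rule sum.cong) (auto simp: algebra_simps)
    thus ?thesis unfolding S2 T_def by (simp add: sum.distrib sum_distrib_left)
  qed
  have "(\<Sum>i=1..p. (l1 + l2 * (real p - real i)) * abs_kth p x i)
      = (\<Sum>m<p. (l1 + l2 * (real p - real (Suc m))) * L ! m)"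
    by (simp add: sum.atLeast1_atMost_eq abs_kth_def L_def)
  also have "\<dots> = l1 * (\<Sum>m<p. L ! m) + l2 * T"
  proof -
    have "(\<Sum>m<p. (l1 + l2 * (real p - real (Suc m))) * L ! m)
       = (\<Sum>m<p. l1 * L ! m + l2 * ((real p - 1 - real m) * L ! m))"
      by (rule sum.cong) (auto simp: algebra_simps)
    thus ?thesis unfolding T_def by (simp add: sum.distrib sum_distrib_left)
  qed
  finally have fin: "(\<Sum>i=1..p. (l1 + l2 * (real p - real i)) * abs_kth p x i) = l1 * (\<Sum>m<p. L ! m) + l2 * T" .
  have h1: "Dx p (\<lambda>k. \<bar>x k\<bar>) - Sx p (\<lambda>k. \<bar>x k\<bar>) = 2 * T" using Q2 QLv SL by linarith
  have h2: "Sx p (\<lambda>k. \<bar>x k\<bar>) = (\<Sum>m<p. L ! m)" using SL S2 by linarith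
  have h3: "l2 * (Dx p (\<lambda>k. \<bar>x k\<bar>) - Sx p (\<lambda>k. \<bar>x k\<bar>)) / 2 = l2 * T" by (simp add: h1)
  show ?thesis unfolding h3 unfolding fin h2 ..
qed


lemma sum_two_change:
  fixes g g' :: "nat \<Rightarrow> real"
  assumes "i < p" "j < p" "i \<noteq> j" "\<And>k. k \<noteq> i \<Longrightarrow> k \<noteq> j \<Longrightarrow> g' k = g k"
  shows "(\<Sum>k<p. g' k) = (\<Sum>k<p. g k) + (g' i - g i) + (g' j - g j)"
proof -
  have "(\<Sum>k<p. g' k - g k) = (\<Sum>k\<in>{i,j}. g' k - g k)"
    by (rule sum.mono_neutral_right) (use assms in auto)
  hence "(\<Sum>k<p. g' k) - (\<Sum>k<p. g k) = (g' i - g i) + (g' j - g j)"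
    using assms(3) by (simp add: sum_subtractf)
  thus ?thesis by simp
qed

lemma sum_le_two:
  fixes f :: "nat \<Rightarrow> real"
  assumes "i < p" "j < p" "i \<noteq> j" "\<And>k. k < p \<Longrightarrow> k \<noteq> i \<Longrightarrow> k \<noteq> j \<Longrightarrow> f k \<le> 0"
  shows "(\<Sum>k<p. f k) \<le> f i + f j"
proof -
  have "(\<Sum>k<p. f k) = (\<Sum>k\<in>{..<p} - {i,j}. f k) + (\<Sum>k\<in>{i,j}. f k)"
    by (rule sum.subset_diff) (use assms in auto)
  moreover have "(\<Sum>k\<in>{..<p} - {i,j}. f k) \<le> 0"
    by (rule sum_nonpos) (use assms in auto)
  ultimately show ?thesis using assms(3) by simp
qed

lemma max_pair: "(u'::real) \<le> u \<Longrightarrow> u' + v' \<le> u + v \<Longrightarrow> v \<le> v' \<Longrightarrow> v' \<le> u' \<Longrightarrow>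
   max c u' + max c v' \<le> max c u + max c v"
  by (simp add: max_def)

lemma Dx_change:
  fixes t t' :: "nat \<Rightarrow> real"
  assumes ij: "i < p" "j < p" "i \<noteq> j" and out: "\<And>k. k \<noteq> i \<Longrightarrow> k \<noteq> j \<Longrightarrow> t' k = t k"
    and o1: "t j \<le> t' j" "t' j \<le> t' i" "t' i \<le> t i" "t' i + t' j \<le> t i + t j"
  shows "Dx p t' \<le> Dx p t - 2 * (t i - t' i) + (t' i + t' j - t i - t j)"
proof -
  define u where "u = t i" define v where "v = t j"
  define u' where "u' = t' i" define v' where "v' = t' j"
  define H where "H c = (\<Sum>l<p. max c (t l))" for c
  define D where "D c = max c u' + max c v' - max c u - max c v" for c
  have inner: "(\<Sum>l<p. max c (t' l)) = H c + D c" for c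
    unfolding H_def D_def u_def v_def u'_def v'_def
    by (subst sum_two_change[OF ij, of "\<lambda>l. max c (t' l)" "\<lambda>l. max c (t l)"]) (use out in auto)
  have e1: "Dx p t' = (\<Sum>k<p. H (t' k)) + (\<Sum>k<p. D (t' k))"
    unfolding Dx_def using inner by (simp add: sum.distrib)
  have e2: "(\<Sum>k<p. H (t' k)) = Dx p t + (H u' - H u) + (H v' - H v)"
    unfolding u_def v_def u'_def v'_def Dx_def H_def[symmetric]
    by (rule sum_two_change[OF ij]) (use out in auto)
  have e3: "(H u' - H u) + (H v' - H v) \<le> u' + v' - u - v"
  proof -
    have "(H u' - H u) + (H v' - H v) = (\<Sum>l<p. max u' (t l) + max v' (t l) - max u (t l) - max v (t l))"
      unfolding H_def by (simp add: sum.distrib sum_subtractf)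
    also have "\<dots> \<le> (max u' (t i) + max v' (t i) - max u (t i) - max v (t i))
                  + (max u' (t j) + max v' (t j) - max u (t j) - max v (t j))"
      by (rule sum_le_two[OF ij]) (use max_pair[of u' u v' v] o1 in \<open>auto simp: u_def v_def u'_def v'_def max.commute\<close>)
    also have "\<dots> = u' + v' - u - v"
      using o1 unfolding u_def v_def u'_def v'_def by (simp add: max_def)
    finally show ?thesis .
  qed
  have e4: "(\<Sum>k<p. D (t' k)) \<le> D (t' i) + D (t' j)"
    by (rule sum_le_two[OF ij]) (use max_pair[of u' u v' v] o1 in \<open>auto simp: D_def u_def v_def u'_def v'_def\<close>)
  have e5: "D (t' i) + D (t' j) = -2 * (u - u')"
    using o1 unfolding D_def u_def v_def u'_def v'_def by (simp add: max_def)
  have "Dx p t' \<le> Dx p t - 2 * (u - u') + (u' + v' - u - v)"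
    using e1 e2 e3 e4 e5 by linarith
  thus ?thesis unfolding u_def v_def u'_def v'_def .
qed

lemma cauchy_sum:
  fixes b :: "nat \<Rightarrow> real"
  shows "(\<Sum>r<n. b r)\<^sup>2 \<le> real n * (\<Sum>r<n. (b r)\<^sup>2)"
proof -
  have "(\<Sum>r<n. b r)\<^sup>2 = (\<Sum>r<n. \<Sum>s<n. b r * b s)"
    by (simp add: power2_eq_square sum_product)
  also have "\<dots> \<le> (\<Sum>r<n. \<Sum>s<n. ((b r)\<^sup>2 + (b s)\<^sup>2) / 2)"
  proof (intro sum_mono)
    fix r s
    have "0 \<le> (b r - b s)\<^sup>2" by simp
    thus "b r * b s \<le> ((b r)\<^sup>2 + (b s)\<^sup>2) / 2" by (simp add: power2_eq_square algebra_simps)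
  qed
  also have "\<dots> = real n * (\<Sum>r<n. (b r)\<^sup>2)"
    by (simp add: sum.distrib add_divide_distrib sum_divide_distrib[symmetric] sum_distrib_left[symmetric])
  finally show ?thesis .
qed



lemma core:
  fixes n p :: nat and A :: "nat \<Rightarrow> nat \<Rightarrow> real" and y xh :: "nat \<Rightarrow> real"
    and l1 l2 :: real
  assumes l1: "l1 \<ge> 0" and l2: "l2 \<ge> 0"
    and min: "\<forall>x. lad_oscar_obj n p A y l1 l2 xh \<le> lad_oscar_obj n p A y l1 l2 x"
    and ij: "i < p" "j < p" and lt: "\<bar>xh j\<bar> < \<bar>xh i\<bar>"
    and C: "(\<Sum>r<n. \<bar>sgn (xh i) * A r i - sgn (xh j) * A r j\<bar>) < l2"
  shows False
proof -
  have ne: "i \<noteq> j" using lt by auto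
  note ij3 = ij ne
  define si where "si = sgn (xh i)"
  define sj where "sj = sgn (xh j)"
  define d where "d = (\<bar>xh i\<bar> - \<bar>xh j\<bar>) / 2"
  have dpos: "d > 0" using lt by (simp add: d_def)
  define x' where "x' = xh(i := xh i - d * si, j := xh j + d * sj)"
  have x'i: "x' i = xh i - d * si" using ne by (simp add: x'_def)
  have x'j: "x' j = xh j + d * sj" by (simp add: x'_def)
  have x'o: "\<And>k. k \<noteq> i \<Longrightarrow> k \<noteq> j \<Longrightarrow> x' k = xh k" by (simp add: x'_def)
  have ai: "\<bar>x' i\<bar> = \<bar>xh i\<bar> - d"
    using lt unfolding x'i si_def d_def by (cases "xh i > 0") (auto simp: abs_if field_simps)
  have aj: "\<bar>x' j\<bar> = \<bar>xh j\<bar> + d * \<bar>sj\<bar>"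
    using lt dpos unfolding x'j sj_def by (cases "xh j > 0"; cases "xh j < 0") (auto simp: abs_if)
  have sjb: "\<bar>sj\<bar> \<le> 1" "0 \<le> \<bar>sj\<bar>" by (auto simp: sj_def abs_sgn_eq)
  have dsj: "0 \<le> d * \<bar>sj\<bar>" "d * \<bar>sj\<bar> \<le> d" using dpos sjb mult_left_mono[OF sjb(1), of d] by auto
  define t where "t k = \<bar>xh k\<bar>" for k
  define t' where "t' k = \<bar>x' k\<bar>" for k
  have tout: "\<And>k. k \<noteq> i \<Longrightarrow> k \<noteq> j \<Longrightarrow> t' k = t k" using x'o by (simp add: t_def t'_def)
  define e where "e = t' i + t' j - t i - t j"
  have eneg: "e \<le> 0" using ai aj dsj by (simp add: e_def t_def t'_def)
  have Sch: "Sx p t' = Sx p t + e"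
    unfolding Sx_def e_def by (subst sum_two_change[OF ij3, of t' t]) (use tout in auto)
  have Dch: "Dx p t' \<le> Dx p t - 2 * d + e"
  proof -
    have "Dx p t' \<le> Dx p t - 2 * (t i - t' i) + (t' i + t' j - t i - t j)"
    proof (rule Dx_change[OF ij3 tout])
      show "t j \<le> t' j" unfolding t_def t'_def ai aj using dsj dpos d_def by argo
      show "t' j \<le> t' i" unfolding t_def t'_def ai aj using dsj dpos d_def by argo
      show "t' i \<le> t i" unfolding t_def t'_def ai aj using dsj dpos d_def by argo
      show "t' i + t' j \<le> t i + t j" unfolding t_def t'_def ai aj using dsj dpos d_def by argo
    qed
    thus ?thesis using ai by (simp add: e_def t_def t'_def)
  qed
  define Cc where "Cc = (\<Sum>r<n. \<bar>si * A r i - sj * A r j\<bar>)"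
  have loss: "(\<Sum>r<n. \<bar>(\<Sum>k<p. A r k * x' k) - y r\<bar>)
      \<le> (\<Sum>r<n. \<bar>(\<Sum>k<p. A r k * xh k) - y r\<bar>) + d * Cc"
  proof -
    have "(\<Sum>r<n. \<bar>(\<Sum>k<p. A r k * x' k) - y r\<bar>)
        \<le> (\<Sum>r<n. \<bar>(\<Sum>k<p. A r k * xh k) - y r\<bar> + d * \<bar>si * A r i - sj * A r j\<bar>)"
    proof (rule sum_mono)
      fix r
      have "(\<Sum>k<p. A r k * x' k) = (\<Sum>k<p. A r k * xh k) + (A r i * x' i - A r i * xh i) + (A r j * x' j - A r j * xh j)"
        by (rule sum_two_change[OF ij3]) (use x'o in auto)
      also have "\<dots> = (\<Sum>k<p. A r k * xh k) - d * (si * A r i - sj * A r j)"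
        unfolding x'i x'j by (simp add: algebra_simps)
      finally have "(\<Sum>k<p. A r k * x' k) - y r = ((\<Sum>k<p. A r k * xh k) - y r) - d * (si * A r i - sj * A r j)"
        by simp
      hence "\<bar>(\<Sum>k<p. A r k * x' k) - y r\<bar> \<le> \<bar>(\<Sum>k<p. A r k * xh k) - y r\<bar> + \<bar>d * (si * A r i - sj * A r j)\<bar>"
        by (metis abs_triangle_ineq4)
      thus "\<bar>(\<Sum>k<p. A r k * x' k) - y r\<bar> \<le> \<bar>(\<Sum>k<p. A r k * xh k) - y r\<bar> + d * \<bar>si * A r i - sj * A r j\<bar>"
        using dpos by (simp add: abs_mult)
    qed
    thus ?thesis by (simp add: sum.distrib Cc_def sum_distrib_left)
  qed
  have CC: "Cc < l2" using C by (simp add: Cc_def si_def sj_def)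
  have objf: "lad_oscar_obj n p A y l1 l2 z = (\<Sum>r<n. \<bar>(\<Sum>k<p. A r k * z k) - y r\<bar>)
      + (l1 * Sx p (\<lambda>k. \<bar>z k\<bar>) + l2 * (Dx p (\<lambda>k. \<bar>z k\<bar>) - Sx p (\<lambda>k. \<bar>z k\<bar>)) / 2)" for z
    unfolding lad_oscar_obj_def pen_formula ..
  have f1: "l2 * (Dx p t' - Sx p t') \<le> l2 * (Dx p t - Sx p t - 2 * d)"
    by (rule mult_left_mono) (use Dch Sch l2 in auto)
  have f2: "l1 * e \<le> 0" using l1 eneg by (simp add: mult_nonneg_nonpos)
  have f3: "d * Cc < d * l2" using dpos CC by simp
  have g1: "l1 * Sx p t' = l1 * Sx p t + l1 * e" using Sch by (simp add: distrib_left)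
  have g2: "l2 * (Dx p t - Sx p t - 2 * d) = l2 * (Dx p t - Sx p t) - 2 * (d * l2)"
    by (simp add: algebra_simps)
  have "lad_oscar_obj n p A y l1 l2 x' < lad_oscar_obj n p A y l1 l2 xh"
    unfolding objf t_def[symmetric] t'_def[symmetric]
    using loss f1 f2 f3 g1 g2 by linarith
  thus False using min by (meson not_le)
qed



theorem corollary4:
  fixes n p :: nat and A :: "nat \<Rightarrow> nat \<Rightarrow> real" and y xh :: "nat \<Rightarrow> real"
    and l1 l2 :: real
  assumes "l1 \<ge> 0" and "l2 \<ge> 0" and "l1 + l2 * (real p - 1) > 0"
    and min: "\<forall>x. lad_oscar_obj n p A y l1 l2 xh \<le> lad_oscar_obj n p A y l1 l2 x"
  shows "(\<forall>i<p. \<forall>j<p.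
            (\<Sum>r<n. \<bar>sgn (xh i) * A r i - sgn (xh j) * A r j\<bar>) < l2
              \<longrightarrow> \<bar>xh i\<bar> = \<bar>xh j\<bar>)
       \<and> ((\<forall>k<p. (\<Sum>r<n. A r k) = 0 \<and> sqrt (\<Sum>r<n. (A r k)\<^sup>2) = 1) \<longrightarrow>
          (\<forall>i<p. \<forall>j<p.
            sqrt (real n * (2 - 2 * (\<Sum>r<n. A r i * A r j) * sgn (xh i * xh j))) < l2
              \<longrightarrow> \<bar>xh i\<bar> = \<bar>xh j\<bar>))"
proof -
  have P1: "\<bar>xh i\<bar> = \<bar>xh j\<bar>"
    if ij: "i < p" "j < p" and C: "(\<Sum>r<n. \<bar>sgn (xh i) * A r i - sgn (xh j) * A r j\<bar>) < l2" for i j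
  proof -
    have C': "(\<Sum>r<n. \<bar>sgn (xh j) * A r j - sgn (xh i) * A r i\<bar>) < l2"
      using C by (simp add: abs_minus_commute)
    show ?thesis
    proof (rule ccontr)
      assume "\<bar>xh i\<bar> \<noteq> \<bar>xh j\<bar>"
      hence "\<bar>xh j\<bar> < \<bar>xh i\<bar> \<or> \<bar>xh i\<bar> < \<bar>xh j\<bar>" by linarith
      thus False
        using core[OF assms(1,2) min ij _ C] core[OF assms(1,2) min ij(2,1) _ C'] by blast
    qed
  qed
  have P2: "\<bar>xh i\<bar> = \<bar>xh j\<bar>"
    if N: "\<forall>k<p. (\<Sum>r<n. A r k) = 0 \<and> sqrt (\<Sum>r<n. (A r k)\<^sup>2) = 1"
      and ij: "i < p" "j < p"
      and S: "sqrt (real n * (2 - 2 * (\<Sum>r<n. A r i * A r j) * sgn (xh i * xh j))) < l2" for i j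
  proof -
    define si where "si = sgn (xh i)"
    define sj where "sj = sgn (xh j)"
    define dd where "dd r = si * A r i - sj * A r j" for r
    have ni: "(\<Sum>r<n. (A r i)\<^sup>2) = 1" using N ij by auto
    have nj: "(\<Sum>r<n. (A r j)\<^sup>2) = 1" using N ij by auto
    have sq: "(\<Sum>r<n. (dd r)\<^sup>2) = si\<^sup>2 * (\<Sum>r<n. (A r i)\<^sup>2) + sj\<^sup>2 * (\<Sum>r<n. (A r j)\<^sup>2)
        - 2 * (\<Sum>r<n. A r i * A r j) * (si * sj)"
      unfolding dd_def
      by (simp add: power2_eq_square algebra_simps sum.distrib sum_subtractf sum_distrib_left sum_distrib_right)
    have si2: "si\<^sup>2 \<le> 1" "sj\<^sup>2 \<le> 1"
      by (auto simp: si_def sj_def sgn_if)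
    have sg: "sgn (xh i * xh j) = si * sj" by (simp add: si_def sj_def sgn_mult)
    have le2: "(\<Sum>r<n. (dd r)\<^sup>2) \<le> 2 - 2 * (\<Sum>r<n. A r i * A r j) * sgn (xh i * xh j)"
      unfolding sq ni nj sg using si2 by simp
    have cs: "(\<Sum>r<n. \<bar>dd r\<bar>)\<^sup>2 \<le> real n * (\<Sum>r<n. (dd r)\<^sup>2)"
      using cauchy_sum[of "\<lambda>r. \<bar>dd r\<bar>" n] by simp
    have "(\<Sum>r<n. \<bar>dd r\<bar>) \<le> sqrt (real n * (\<Sum>r<n. (dd r)\<^sup>2))"
      by (rule real_le_rsqrt[OF cs])
    also have "\<dots> \<le> sqrt (real n * (2 - 2 * (\<Sum>r<n. A r i * A r j) * sgn (xh i * xh j)))"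
      by (rule real_sqrt_le_mono, rule mult_left_mono[OF le2]) simp
    finally have "(\<Sum>r<n. \<bar>dd r\<bar>) < l2" using S by linarith
    thus ?thesis using P1[OF ij] by (simp add: dd_def si_def sj_def)
  qed
  show ?thesis using P1 P2 by blast
qed


end
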